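(* Let $m$ be a non-empty finite word over $D=\{E,N,S,W\}$. If the word $mm$ is a free path, then the bi-infinite word ${}^{\omega}m^{\omega}=\cdots mmm\cdots$ is a free path.
   Context: $D=\{E,N,S,W\}$ with $E=(1,0)$, $N=(0,1)$, $S=(0,-1)$, $W=(-1,0)$; $\mathbb Z^2$ is viewed as the grid graph in which two points are adjacent iff they are at Euclidean distance $1$. A free path is a (finite, forward infinite, backward infinite or bi-infinite) word over $D$ such that the walk in $\mathbb Z^2$ obtained by starting at some point and successively adding the letters of the word as unit vectors never visits a vertex twice (i.e. it is a simple path; this does not depend on the starting point). *)

theory Defs
  imports Main "HOL-Library.Product_Plus"
begin

datatype dir = E | N | S | W

fun vec :: "dir \<Rightarrow> int \<times> int" where
  "vec E = (1, 0)" | "vec N = (0, 1)" | "vec S = (0, -1)" | "vec W = (-1, 0)"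

definition walk :: "dir list \<Rightarrow> nat \<Rightarrow> int \<times> int" where
  "walk m k = sum_list (map vec (take k m))"

definition free_finite :: "dir list \<Rightarrow> bool" where
  "free_finite m \<longleftrightarrow> inj_on (walk m) {0..length m}"

(* bi-infinite word w : int => dir; position of the walk at time k, with position 0 at time 0
   and pos w (k+1) = pos w k + vec (w k) *)
definition biwalk :: "(int \<Rightarrow> dir) \<Rightarrow> int \<Rightarrow> int \<times> int" where
  "biwalk w k = (if 0 \<le> k then (\<Sum>i\<in>{0..<k}. vec (w i)) else - (\<Sum>i\<in>{k..<0}. vec (w i)))"

definition free_biinf :: "(int \<Rightarrow> dir) \<Rightarrow> bool" where
  "free_biinf w \<longleftrightarrow> inj (biwalk w)"

definition biperiodic :: "dir list \<Rightarrow> int \<Rightarrow> dir" where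
  "biperiodic m i = m ! nat (i mod int (length m))"

end

theory Submission
  imports Defs "HOL-Complex_Analysis.Complex_Analysis"
begin


definition lat :: "complex \<Rightarrow> bool" where "lat z \<longleftrightarrow> Re z \<in> \<int> \<and> Im z \<in> \<int>"

lemma Ints_01: "(x::real) \<in> \<int> \<Longrightarrow> 0 < x \<Longrightarrow> x < 1 \<Longrightarrow> False"
  by (metis Ints_cases of_int_0_less_iff of_int_less_1_iff not_less zero_less_iff_neq_zero int_one_le_iff_zero_less less_le_not_le of_int_less_iff of_int_1 zless_imp_add1_zle)

lemma Ints_m11: "(x::real) \<in> \<int> \<Longrightarrow> -1 < x \<Longrightarrow> x < 1 \<Longrightarrow> x = 0"
proof -
  assume "x \<in> \<int>" "-1 < x" "x < 1"
  then obtain k where "x = of_int k" by (auto elim: Ints_cases)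
  with \<open>-1<x\<close> \<open>x<1\<close> show "x = 0" by simp
qed

lemma Ints_02: "(x::real) \<in> \<int> \<Longrightarrow> 0 < x \<Longrightarrow> x < 2 \<Longrightarrow> x = 1"
proof -
  assume "x \<in> \<int>" "0 < x" "x < 2"
  then obtain k where "x = of_int k" by (auto elim: Ints_cases)
  with \<open>0<x\<close> \<open>x<2\<close> show "x = 1" by simp
qed

lemma lat_diff: "lat a \<Longrightarrow> lat b \<Longrightarrow> lat (a - b)" by (simp add: lat_def)
lemma lat_add: "lat a \<Longrightarrow> lat b \<Longrightarrow> lat (a + b)" by (simp add: lat_def)
lemma lat_intmult: "lat V \<Longrightarrow> lat (of_int NN * V)" by (simp add: lat_def)
lemma lat_units: "D \<in> {1,-1,\<i>,-\<i>} \<Longrightarrow> lat D" by (auto simp: lat_def)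

lemma unit_frac: "D \<in> {1,-1,\<i>,-\<i>} \<Longrightarrow> 0 < l \<Longrightarrow> l < 1 \<Longrightarrow> lat (of_real l * D) \<Longrightarrow> False"
  by (auto simp: lat_def dest: Ints_01 Ints_minus)

lemma unit_frac2:
  assumes "D1 \<in> {1,-1,\<i>,-\<i>}" "D2 \<in> {1,-1,\<i>,-\<i>}" "0 < l1" "l1 < 1" "0 < l2" "l2 < 1"
    "lat (of_real l1 * D1 - of_real l2 * D2)"
  shows "(D1 = D2 \<and> l1 = l2) \<or> (D2 = - D1 \<and> l2 = 1 - l1)"
proof -
  have a: "l1 - l2 \<in> \<int> \<Longrightarrow> l1 = l2" using Ints_m11[of "l1 - l2"] assms(3-6) by auto
  have a': "l2 - l1 \<in> \<int> \<Longrightarrow> l1 = l2" using Ints_m11[of "l2 - l1"] assms(3-6) by auto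
  have b: "l1 + l2 \<in> \<int> \<Longrightarrow> l2 = 1 - l1" using Ints_02[of "l1 + l2"] assms(3-6) by auto
  have c: "- l1 - l2 \<in> \<int> \<Longrightarrow> l2 = 1 - l1"
  proof -
    assume h: "- l1 - l2 \<in> \<int>" then have "- (- l1 - l2) \<in> \<int>" by (rule Ints_minus)
    then have "l1 + l2 \<in> \<int>" by (simp add: algebra_simps)
    then show ?thesis by (rule b)
  qed
  have d: "- l1 + l2 \<in> \<int> \<Longrightarrow> l1 = l2"
  proof -
    assume h: "- l1 + l2 \<in> \<int>" then have "- (- l1 + l2) \<in> \<int>" by (rule Ints_minus)
    then have "l1 - l2 \<in> \<int>" by (simp add: algebra_simps)
    then show ?thesis by (rule a)
  qed
  have e: "(l::real) \<in> \<int> \<Longrightarrow> 0 < l \<Longrightarrow> l < 1 \<Longrightarrow> False" for l using Ints_01 by metis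
  have e': "- (l::real) \<in> \<int> \<Longrightarrow> 0 < l \<Longrightarrow> l < 1 \<Longrightarrow> False" for l
    using Ints_01[of l] by simp
  have R: "Re (of_real l1 * D1 - of_real l2 * D2) \<in> \<int>" and I: "Im (of_real l1 * D1 - of_real l2 * D2) \<in> \<int>"
    using assms(7) by (auto simp: lat_def)
  have l: "0 < l1" "l1 < 1" "0 < l2" "l2 < 1" using assms(3-6) by auto
  note RIl = R I l
  from assms(1,2) consider "D1 = 1" "D2 = 1" | "D1 = 1" "D2 = -1" | "D1 = 1" "D2 = \<i>" | "D1 = 1" "D2 = -\<i>"
    | "D1 = -1" "D2 = 1" | "D1 = -1" "D2 = -1" | "D1 = -1" "D2 = \<i>" | "D1 = -1" "D2 = -\<i>"
    | "D1 = \<i>" "D2 = 1" | "D1 = \<i>" "D2 = -1" | "D1 = \<i>" "D2 = \<i>" | "D1 = \<i>" "D2 = -\<i>"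
    | "D1 = -\<i>" "D2 = 1" | "D1 = -\<i>" "D2 = -1" | "D1 = -\<i>" "D2 = \<i>" | "D1 = -\<i>" "D2 = -\<i>"
    by (elim insertE emptyE) metis+
  then show ?thesis
    by (cases; insert RIl; simp; (blast dest: a a' b c Ints_01))
qed


lemma lemB:
  fixes q :: "nat \<Rightarrow> complex" and L :: nat and V :: complex and K :: int
  assumes latq: "\<And>s. s \<le> L \<Longrightarrow> lat (q s)"
    and step: "\<And>s. s < L \<Longrightarrow> q (Suc s) - q s \<in> {1,-1,\<i>,-\<i>}"
    and latV: "lat V" and V0: "V \<noteq> 0"
    and endp: "q L - q 0 = of_int K * V" and K0: "K \<noteq> 0"
    and DF: "\<And>s t NN. s \<le> L \<Longrightarrow> t \<le> L \<Longrightarrow> q s - q t = of_int NN * V \<Longrightarrow>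
               s = t \<or> (s = 0 \<and> t = L) \<or> (s = L \<and> t = 0)"
    and a: "a1 < L" "a2 < L" and l: "0 \<le> l1" "l1 \<le> 1" "0 \<le> l2" "l2 \<le> 1"
    and eqn: "q a1 + of_real l1 * (q (Suc a1) - q a1) - (q a2 + of_real l2 * (q (Suc a2) - q a2)) = of_int NN * V"
  shows "real a1 + l1 = real a2 + l2 \<or> (real a1 + l1 = 0 \<and> real a2 + l2 = real L)
         \<or> (real a1 + l1 = real L \<and> real a2 + l2 = 0)"
proof -
  define D1 where "D1 = q (Suc a1) - q a1"
  define D2 where "D2 = q (Suc a2) - q a2"
  have D1u: "D1 \<in> {1,-1,\<i>,-\<i>}" using step a unfolding D1_def by auto
  have D2u: "D2 \<in> {1,-1,\<i>,-\<i>}" using step a unfolding D2_def by auto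
  have eq: "q a1 + of_real l1 * D1 - (q a2 + of_real l2 * D2) = of_int NN * V"
    using eqn unfolding D1_def D2_def .
  have NV: "lat (of_int NN * V)" using latV by (rule lat_intmult)
  have lq1: "lat (q a1)" "lat (q a2)" using latq a by auto
  have endpt: "\<exists>b\<le>L. q a + of_real l * (q (Suc a) - q a) = q b \<and> real b = real a + l"
    if "a < L" "l = 0 \<or> l = 1" for a l
  proof (cases "l = 0")
    case True then show ?thesis using that by (intro exI[of _ a]) auto
  next
    case False then have "l = 1" using that by auto
    then show ?thesis using that by (intro exI[of _ "Suc a"]) auto
  qed
  consider "l1 = 0 \<or> l1 = 1" "l2 = 0 \<or> l2 = 1" | "0 < l1" "l1 < 1" "l2 = 0 \<or> l2 = 1"
    | "l1 = 0 \<or> l1 = 1" "0 < l2" "l2 < 1" | "0 < l1" "l1 < 1" "0 < l2" "l2 < 1"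
    using l by linarith
  then show ?thesis
  proof cases
    case 1
    obtain b1 where b1: "b1 \<le> L" "q a1 + of_real l1 * D1 = q b1" "real b1 = real a1 + l1"
      using endpt[OF a(1) 1(1)] unfolding D1_def by blast
    obtain b2 where b2: "b2 \<le> L" "q a2 + of_real l2 * D2 = q b2" "real b2 = real a2 + l2"
      using endpt[OF a(2) 1(2)] unfolding D2_def by blast
    have "q b1 - q b2 = of_int NN * V" using eq b1 b2 by simp
    from DF[OF b1(1) b2(1) this] show ?thesis using b1(3) b2(3) by auto
  next
    case 2
    obtain b2 where b2: "b2 \<le> L" "q a2 + of_real l2 * D2 = q b2" "real b2 = real a2 + l2"
      using endpt[OF a(2) 2(3)] unfolding D2_def by blast
    have "of_real l1 * D1 = of_int NN * V - q a1 + q b2" using eq b2 by (simp add: algebra_simps)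
    moreover have "lat (of_int NN * V - q a1 + q b2)"
      using NV lq1 latq[OF b2(1)] by (intro lat_add lat_diff)
    ultimately show ?thesis using unit_frac[OF D1u 2(1,2)] by simp
  next
    case 3
    obtain b1 where b1: "b1 \<le> L" "q a1 + of_real l1 * D1 = q b1" "real b1 = real a1 + l1"
      using endpt[OF a(1) 3(1)] unfolding D1_def by blast
    have "of_real l2 * D2 = q b1 - q a2 - of_int NN * V" using eq b1 by (simp add: algebra_simps)
    moreover have "lat (q b1 - q a2 - of_int NN * V)"
      using NV lq1 latq[OF b1(1)] by (intro lat_add lat_diff)
    ultimately show ?thesis using unit_frac[OF D2u 3(2,3)] by simp
  next
    case 4
    have "of_real l1 * D1 - of_real l2 * D2 = of_int NN * V - q a1 + q a2" using eq by (simp add: algebra_simps)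
    moreover have "lat (of_int NN * V - q a1 + q a2)"
      using NV lq1 by (intro lat_add lat_diff)
    ultimately have "lat (of_real l1 * D1 - of_real l2 * D2)" by simp
    from unit_frac2[OF D1u D2u 4 this] show ?thesis
    proof
      assume h: "D1 = D2 \<and> l1 = l2"
      then have "q a1 - q a2 = of_int NN * V" using eq by (simp add: algebra_simps)
      from DF[OF _ _ this] a have "a1 = a2" by auto
      then show ?thesis using h by simp
    next
      assume h: "D2 = - D1 \<and> l2 = 1 - l1"
      have e1: "q (Suc a1) - q a2 = of_int NN * V"
        using eq h unfolding D1_def by (simp add: algebra_simps)
      have "q (Suc a2) = q a2 - (q (Suc a1) - q a1)" using h unfolding D1_def D2_def
        by (simp add: algebra_simps)
      then have e2: "q a1 - q (Suc a2) = of_int NN * V"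
        using e1 by (simp add: algebra_simps)
      have KV: "q L \<noteq> q 0" using endp K0 V0 by auto
      have N0: "q x = q y \<Longrightarrow> q x - q y = of_int NN * V \<Longrightarrow> NN = 0" for x y using V0 by simp
      from DF[OF _ _ e1] DF[OF _ _ e2] a
      have "(Suc a1 = a2 \<or> (Suc a1 = L \<and> a2 = 0)) \<and> (a1 = Suc a2 \<or> (a1 = 0 \<and> Suc a2 = L))"
        by auto
      then consider "Suc a1 = a2" "a1 = Suc a2" | "Suc a1 = a2" "a1 = 0" "Suc a2 = L"
        | "Suc a1 = L" "a2 = 0" "a1 = Suc a2" | "Suc a1 = L" "a2 = 0" "a1 = 0" "Suc a2 = L"
        by blast
      then show ?thesis
      proof cases
        case 1 then show ?thesis by simp
      next
        case 2
        then have "NN = 0" using e1 N0 by auto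
        then show ?thesis using e2 2 KV by auto
      next
        case 3
        then have "NN = 0" using e2 N0 by auto
        then show ?thesis using e1 3 KV by auto
      next
        case 4
        then have "D1 = D2" unfolding D1_def D2_def by simp
        then show ?thesis using h D1u by auto
      qed
    qed
  qed
qed


definition hpol :: "(nat \<Rightarrow> complex) \<Rightarrow> nat \<Rightarrow> real \<Rightarrow> complex" where
  "hpol q L u = (\<Sum>s<L. of_real (min 1 (max 0 (u - real s))) * (q (Suc s) - q s))"

lemma hpol_cont: "continuous_on A (\<lambda>t. hpol q L (f t))" if "continuous_on A f"
  unfolding hpol_def by (intro continuous_intros that)

lemma hpol_seg:
  assumes "a < L" "0 \<le> l" "l \<le> 1"
  shows "hpol q L (real a + l) = q a - q 0 + of_real l * (q (Suc a) - q a)"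
proof -
  let ?f = "\<lambda>s. of_real (min 1 (max 0 (real a + l - real s))) * (q (Suc s) - q s)"
  have U: "{..<L} = {..<a} \<union> ({a} \<union> {Suc a..<L})" using assms by auto
  have "hpol q L (real a + l) = sum ?f {..<a} + (?f a + sum ?f {Suc a..<L})"
    unfolding hpol_def U by (subst sum.union_disjoint; auto)
  moreover have "sum ?f {..<a} = (\<Sum>s<a. q (Suc s) - q s)"
    by (rule sum.cong) (use assms in auto)
  moreover have "(\<Sum>s<a. q (Suc s) - q s) = q a - q 0" by (rule sum_lessThan_telescope)
  moreover have "sum ?f {Suc a..<L} = 0"
    by (rule sum.neutral) (use assms in auto)
  moreover have "?f a = of_real l * (q (Suc a) - q a)" using assms by simp
  ultimately show ?thesis by simp
qed

lemma hpol_zero: "hpol q L 0 = 0"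
  unfolding hpol_def by (intro sum.neutral) auto

lemma rep_u:
  assumes "0 < L" "0 \<le> u" "u \<le> real L"
  shows "\<exists>a l. a < L \<and> 0 \<le> l \<and> l \<le> 1 \<and> u = real a + l"
proof (cases "u < real L")
  case True
  define a where "a = nat \<lfloor>u\<rfloor>"
  have "real a \<le> u" "u < real a + 1" using assms unfolding a_def by linarith+
  moreover have "a < L" using True assms unfolding a_def by linarith
  ultimately show ?thesis by (intro exI[of _ a] exI[of _ "u - real a"]) auto
next
  case False
  then show ?thesis using assms by (intro exI[of _ "L - 1"] exI[of _ 1]) auto
qed


lemma TL:
  fixes q :: "nat \<Rightarrow> complex" and L :: nat and V :: complex and K :: int
  assumes L0: "0 < L"
    and latq: "\<And>s. s \<le> L \<Longrightarrow> lat (q s)"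
    and step: "\<And>s. s < L \<Longrightarrow> q (Suc s) - q s \<in> {1,-1,\<i>,-\<i>}"
    and latV: "lat V" and V0: "V \<noteq> 0"
    and endp: "q L - q 0 = of_int K * V" and K2: "2 \<le> \<bar>K\<bar>"
    and DF: "\<And>s t NN. s \<le> L \<Longrightarrow> t \<le> L \<Longrightarrow> q s - q t = of_int NN * V \<Longrightarrow>
               s = t \<or> (s = 0 \<and> t = L) \<or> (s = L \<and> t = 0)"
  shows False
proof -
  have K0: "K \<noteq> 0" using K2 by auto
  define c where "c = 2 * of_real pi * \<i> / V"
  define p where "p = (\<lambda>t. c * (q 0 + hpol q L (real L * t)))"
  define \<gamma> where "\<gamma> = exp \<circ> p"
  have pp: "path p" unfolding path_def p_def
    by (intro continuous_intros hpol_cont)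
  have pg: "path \<gamma>" unfolding \<gamma>_def using pp unfolding path_def
    by (intro continuous_on_compose continuous_intros) auto
  have hL: "hpol q L (real L) = q L - q 0"
    using hpol_seg[of "L - 1" L 1 q] L0 by (simp add: of_nat_diff)
  have ps: "pathstart p = c * q 0" unfolding pathstart_def p_def by (simp add: hpol_zero)
  have pf: "pathfinish p = c * q L" unfolding pathfinish_def p_def by (simp add: hL)
  have diff: "pathfinish p - pathstart p = 2 * of_real pi * \<i> * of_int K"
    unfolding ps pf c_def using endp V0 by (simp add: field_simps right_diff_distrib[symmetric])
  have wn: "winding_number \<gamma> 0 = of_int K"
    unfolding \<gamma>_def using winding_number_compose_exp[OF pp] diff by simp
  have closed: "pathfinish \<gamma> = pathstart \<gamma>"
  proof -
    have "pathfinish \<gamma> = exp (pathstart p + 2 * of_real pi * \<i> * of_int K)"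
      using diff unfolding \<gamma>_def pathfinish_def pathstart_def by (simp add: algebra_simps)
    also have "2 * of_real pi * \<i> * of_int K = \<i> * (of_int K * (of_real pi * 2))"
      by (simp add: algebra_simps)
    also have "exp (pathstart p + \<i> * (of_int K * (of_real pi * 2))) = exp (pathstart p)"
      by (rule exp_plus_2pin)
    also have "exp (pathstart p) = pathstart \<gamma>" unfolding \<gamma>_def pathstart_def by simp
    finally show ?thesis .
  qed
  have n0: "0 \<notin> path_image \<gamma>" unfolding \<gamma>_def path_image_def by auto
  have lf: "loop_free \<gamma>"
    unfolding loop_free_def
  proof (intro ballI impI)
    fix x y :: real assume x: "x \<in> {0..1}" and y: "y \<in> {0..1}" and e: "\<gamma> x = \<gamma> y"
    from e obtain n :: int where n: "p x = p y + of_int (2 * n) * of_real pi * \<i>"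
      unfolding \<gamma>_def by (auto simp: exp_eq)
    have "c * (hpol q L (real L * x) - hpol q L (real L * y)) = of_int (2 * n) * of_real pi * \<i>"
      using n unfolding p_def by (simp add: algebra_simps)
    then have "(2 * of_real pi * \<i>) * (hpol q L (real L * x) - hpol q L (real L * y))
        = (2 * of_real pi * \<i>) * (of_int n * V)"
      unfolding c_def using V0 by (simp add: field_simps)
    moreover have "(2 * of_real pi * \<i>) \<noteq> (0::complex)" by simp
    ultimately have gd: "hpol q L (real L * x) - hpol q L (real L * y) = of_int n * V"
      by (rule mult_left_cancel[THEN iffD1, rotated])
    obtain a1 l1 where r1: "a1 < L" "0 \<le> l1" "l1 \<le> 1" "real L * x = real a1 + l1"
      using rep_u[OF L0, of "real L * x"] x mult_left_le[of x "real L"] by auto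
    obtain a2 l2 where r2: "a2 < L" "0 \<le> l2" "l2 \<le> 1" "real L * y = real a2 + l2"
      using rep_u[OF L0, of "real L * y"] y mult_left_le[of y "real L"] by auto
    have "q a1 + of_real l1 * (q (Suc a1) - q a1) - (q a2 + of_real l2 * (q (Suc a2) - q a2)) = of_int n * V"
      using gd unfolding r1(4) r2(4) hpol_seg[OF r1(1-3)] hpol_seg[OF r2(1-3)] by (simp add: algebra_simps)
    from lemB[OF latq step latV V0 endp K0 DF r1(1) r2(1) r1(2,3) r2(2,3) this]
    have "real L * x = real L * y \<or> (real L * x = 0 \<and> real L * y = real L) \<or> (real L * x = real L \<and> real L * y = 0)"
      unfolding r1(4) r2(4) .
    then show "x = y \<or> x = 0 \<and> y = 1 \<or> x = 1 \<and> y = 0" using L0 by auto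
  qed
  have "simple_path \<gamma>" unfolding simple_path_def using pg lf by simp
  from simple_closed_path_winding_number_cases[OF this closed n0] wn
  have "(of_int K :: complex) \<in> {-1,0,1}" by simp
  moreover have "(of_int K = (-1::complex)) = (K = -1)"
    using of_int_eq_iff[of K "-1", where 'a=complex] by simp
  ultimately have "K \<in> {-1,0,1}" by auto
  then show False using K2 by auto
qed


definition cp :: "int \<times> int \<Rightarrow> complex" where
  "cp z = Complex (of_int (fst z)) (of_int (snd z))"

lemma cp_add: "cp (a + b) = cp a + cp b"
  by (cases a; cases b) (simp add: cp_def complex_eq_iff)
lemma cp_zero: "cp 0 = 0" by (simp add: cp_def complex_eq_iff)
lemma cp_uminus: "cp (- a) = - cp a" by (cases a) (simp add: cp_def complex_eq_iff)
lemma cp_sum: "cp (sum f A) = (\<Sum>x\<in>A. cp (f x))"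
  by (induction A rule: infinite_finite_induct) (auto simp: cp_zero cp_add)
lemma cp_sum_list: "cp (sum_list xs) = sum_list (map cp xs)"
  by (induction xs) (auto simp: cp_zero cp_add)
lemma cp_inj: "cp a = cp b \<Longrightarrow> a = b"
  by (cases a; cases b) (simp add: cp_def complex_eq_iff)
lemma cp_lat: "lat (cp a)" by (simp add: cp_def lat_def)
lemma cp_vec: "cp (Defs.vec d) \<in> {1,-1,\<i>,-\<i>}"
  by (cases d) (auto simp: cp_def complex_eq_iff)

lemma walk_Suc: "r < length m \<Longrightarrow> walk m (Suc r) = walk m r + Defs.vec (m ! r)"
  by (simp add: walk_def take_Suc_conv_app_nth)
lemma walk_app1: "r \<le> length m \<Longrightarrow> walk (m @ m) r = walk m r"
  by (simp add: walk_def)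
lemma walk_app2: "r \<le> length m \<Longrightarrow> walk (m @ m) (length m + r) = walk m (length m) + walk m r"
  by (simp add: walk_def)

lemma int_interval1: "(a::int) < b \<Longrightarrow> {a..<b} = insert a {a+1..<b}" by auto
lemma int_interval2: "(a::int) \<le> b \<Longrightarrow> {a..<b+1} = insert b {a..<b}" by auto

lemma biwalk_step: "biwalk w (t + 1) = biwalk w t + Defs.vec (w t)"
proof (cases "0 \<le> t")
  case True
  then show ?thesis unfolding biwalk_def using int_interval2[of 0 t] by (simp add: add.commute)
next
  case False
  show ?thesis
  proof (cases "t = -1")
    case True then show ?thesis unfolding biwalk_def using int_interval1[of "-1" 0] by simp
  next
    case False
    then have "t + 1 < 0" using \<open>\<not> 0 \<le> t\<close> by simp
    then show ?thesis unfolding biwalk_def using int_interval1[of t 0] \<open>\<not> 0 \<le> t\<close> by simp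
  qed
qed

lemma biwalk_zero: "biwalk w 0 = 0" by (simp add: biwalk_def)

lemma dm0: "(0::int) < n \<Longrightarrow> (t+1) div n = t div n + (t mod n + 1) div n \<and> (t+1) mod n = (t mod n + 1) mod n"
proof -
  assume n: "0 < n"
  have e: "t + 1 = (t mod n + 1) + (t div n) * n" by (metis add.commute add.left_commute div_mult_mod_eq)
  have "(t + 1) div n = ((t mod n + 1) + (t div n) * n) div n"
    using e by (rule arg_cong[where f="\<lambda>x. x div n"])
  also have "\<dots> = t div n + (t mod n + 1) div n" using n by (intro div_mult_self1) simp
  finally have 1: "(t + 1) div n = t div n + (t mod n + 1) div n" .
  have "(t + 1) mod n = ((t mod n + 1) + (t div n) * n) mod n"
    using e by (rule arg_cong[where f="\<lambda>x. x mod n"])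
  also have "\<dots> = (t mod n + 1) mod n" by (rule mod_mult_self1)
  finally show ?thesis using 1 by simp
qed
lemma dm1: "(0::int) < n \<Longrightarrow> t mod n + 1 < n \<Longrightarrow> (t+1) div n = t div n \<and> (t+1) mod n = t mod n + 1"
  using dm0[of n t] by simp
lemma dm2: "(0::int) < n \<Longrightarrow> t mod n = n - 1 \<Longrightarrow> (t+1) div n = t div n + 1 \<and> (t+1) mod n = 0"
  using dm0[of n t] by simp
lemma dm3: "(0::int) < n \<Longrightarrow> t1 div n = t2 div n \<Longrightarrow> nat (t1 mod n) = nat (t2 mod n) \<Longrightarrow> t1 = t2"
  by (metis div_mult_mod_eq nat_eq_iff2 pos_mod_sign)

lemma main:
  fixes m :: "dir list"
  assumes ne: "m \<noteq> []" and ff: "free_finite (m @ m)"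
  shows "free_biinf (biperiodic m)"
proof -
  define n where "n = length m"
  have n0: "0 < n" using ne unfolding n_def by simp
  define P where "P r = cp (walk m r)" for r
  define V where "V = P n"
  have inj: "inj_on (walk (m @ m)) {0..2 * n}" using ff unfolding free_finite_def n_def by (simp add: mult_2)
  have Pa: "s = t" if "s \<le> n" "t \<le> n" "P s = P t" for s t
  proof -
    have "walk (m @ m) s = walk (m @ m) t"
      using that cp_inj walk_app1 unfolding P_def n_def by metis
    then show ?thesis using inj that by (auto dest: inj_onD)
  qed
  have Pb: "s = n \<and> t = 0" if "s \<le> n" "t \<le> n" "P s = V + P t" for s t
  proof -
    have "walk m s = walk m n + walk m t"
      using that cp_inj unfolding P_def V_def by (metis cp_add)
    then have "walk (m @ m) s = walk (m @ m) (n + t)"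
      using that walk_app1 walk_app2 unfolding n_def by metis
    then have "s = n + t" using inj that by (auto dest: inj_onD)
    then show ?thesis using that by simp
  qed
  have P0: "P 0 = 0" unfolding P_def walk_def by (simp add: cp_zero)
  have V0: "V \<noteq> 0" using Pa[of n 0] n0 P0 unfolding V_def by auto
  have Pstep: "P (Suc r) - P r = cp (Defs.vec (m ! r))" if "r < n" for r
    using that walk_Suc[of r m] unfolding P_def n_def by (simp add: cp_add)
  have NBC: "P t - P s \<noteq> of_int K * V" if "s \<le> n" "t \<le> n" "2 \<le> \<bar>K\<bar>" for s t K
  proof
    assume h0: "P t - P s = of_int K * V"
    define SS where "SS = {d. \<exists>i j K. i < j \<and> j \<le> n \<and> 2 \<le> \<bar>K\<bar> \<and> j - i = d \<and> P j - P i = of_int (K::int) * V}"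
    have "SS \<noteq> {}"
    proof (cases "s < t")
      case True then show ?thesis unfolding SS_def using that h0 by blast
    next
      case False
      show ?thesis
      proof (cases "s = t")
        case True then show ?thesis using h0 that V0 by auto
      next
        case False
        then have "t < s" using \<open>\<not> s < t\<close> by simp
        moreover have "P s - P t = of_int (- K) * V" using h0 by (simp add: algebra_simps)
        ultimately have "s - t \<in> SS" unfolding SS_def using that
          by (intro CollectI exI[of _ t] exI[of _ s] exI[of _ "-K"]) auto
        then show ?thesis by blast
      qed
    qed
    define d where "d = Least (\<lambda>d. d \<in> SS)"
    have "d \<in> SS" unfolding d_def using \<open>SS \<noteq> {}\<close> by (metis LeastI ex_in_conv)
    then obtain i j K' where ij: "i < j" "j \<le> n" "2 \<le> \<bar>K'\<bar>" "j - i = d" "P j - P i = of_int K' * V"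
      unfolding SS_def by blast
    have dmin: "d \<le> d'" if "d' \<in> SS" for d' unfolding d_def using that by (rule Least_le)
    define q where "q x = P (i + x)" for x
    define L where "L = j - i"
    show False
    proof (rule TL[of L q V K'])
      show "0 < L" using ij unfolding L_def by simp
      show "lat (q s)" for s unfolding q_def P_def by (rule cp_lat)
      show "q (Suc s) - q s \<in> {1, -1, \<i>, -\<i>}" if "s < L" for s
        using that ij Pstep[of "i + s"] cp_vec unfolding q_def L_def by simp
      show "lat V" unfolding V_def P_def by (rule cp_lat)
      show "V \<noteq> 0" by (rule V0)
      have "i + (j - i) = j" using ij by simp
      then show "q L - q 0 = of_int K' * V" using ij unfolding q_def L_def by simp
      show "2 \<le> \<bar>K'\<bar>" by (rule ij)
      show "s = t \<or> s = 0 \<and> t = L \<or> s = L \<and> t = 0"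
        if st: "s \<le> L" "t \<le> L" "q s - q t = of_int NN * V" for s t NN
      proof -
        have ab: "i + s \<le> n" "i + t \<le> n" using st ij unfolding L_def by auto
        have e: "P (i + s) - P (i + t) = of_int NN * V" using st unfolding q_def by simp
        consider "NN = 0" | "NN = 1" | "NN = -1" | "2 \<le> \<bar>NN\<bar>" by linarith
        then show ?thesis
        proof cases
          case 1 then show ?thesis using Pa[OF ab] e by simp
        next
          case 2
          then have "P (i + s) = V + P (i + t)" using e by (simp add: algebra_simps)
          from Pb[OF ab this] show ?thesis using st ij unfolding L_def by auto
        next
          case 3
          then have "P (i + t) = V + P (i + s)" using e by (simp add: algebra_simps)
          from Pb[OF ab(2,1) this] show ?thesis using st ij unfolding L_def by auto
        next
          case 4
          consider "s = t" | "s < t" | "t < s" by linarith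
          then show ?thesis
          proof cases
            case 1 then show ?thesis by simp
          next
            case 2
            have "P (i + t) - P (i + s) = of_int (- NN) * V" using e by (simp add: algebra_simps)
            then have "(i + t) - (i + s) \<in> SS" unfolding SS_def using 2 ab 4
              by (intro CollectI exI[of _ "i + s"] exI[of _ "i + t"] exI[of _ "-NN"]) auto
            then have "d \<le> t - s" using dmin by simp
            then show ?thesis using 2 st ij unfolding L_def by auto
          next
            case 3
            then have "(i + s) - (i + t) \<in> SS" unfolding SS_def using e ab 4
              by (intro CollectI exI[of _ "i + t"] exI[of _ "i + s"] exI[of _ "NN"]) auto
            then have "d \<le> s - t" using dmin by simp
            then show ?thesis using 3 st ij unfolding L_def by auto
          qed
        qed
      qed
    qed
  qed
  define w where "w = biperiodic m"
  define F where "F t = of_int (t div int n) * V + P (nat (t mod int n))" for t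
  have Fstep: "F (t + 1) = F t + cp (Defs.vec (w t))" for t
  proof -
    define r where "r = t mod int n"
    have r: "0 \<le> r" "r < int n" using n0 unfolding r_def by auto
    have wt: "w t = m ! nat r" unfolding w_def biperiodic_def r_def n_def by simp
    have ps: "P (Suc (nat r)) = P (nat r) + cp (Defs.vec (m ! nat r))"
      using Pstep[of "nat r"] r by (simp add: algebra_simps)
    show ?thesis
    proof (cases "r + 1 < int n")
      case True
      have "(t + 1) div int n = t div int n" "(t + 1) mod int n = r + 1"
        using dm1[of "int n" t] True n0 unfolding r_def by auto
      moreover have "nat (r + 1) = Suc (nat r)" using r by simp
      ultimately show ?thesis unfolding F_def wt using ps
        by (simp add: r_def algebra_simps)
    next
      case False
      then have rn: "r = int n - 1" using r by simp
      have "(t + 1) div int n = t div int n + 1" "(t + 1) mod int n = 0"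
        using dm2[of "int n" t] rn n0 unfolding r_def by auto
      moreover have "nat r = n - 1" "Suc (n - 1) = n" using rn n0 by auto
      moreover have "P n - P (n - 1) = cp (Defs.vec (m ! (n - 1)))"
        using Pstep[of "n - 1"] n0 by simp
      ultimately show ?thesis unfolding F_def wt using P0
        by (simp add: r_def algebra_simps V_def)
    qed
  qed
  have FG: "F t = cp (biwalk w t)" for t
  proof (induction t rule: int_induct[where k = 0])
    case base then show ?case unfolding F_def by (simp add: biwalk_zero cp_zero P0)
  next
    case (step1 i) then show ?case using Fstep[of i] biwalk_step[of w i] by (simp add: cp_add)
  next
    case (step2 i) then show ?case using Fstep[of "i - 1"] biwalk_step[of w "i - 1"] by (simp add: cp_add)
  qed
  show ?thesis unfolding free_biinf_def inj_def
  proof (intro allI impI)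
    fix t1 t2 assume "biwalk (biperiodic m) t1 = biwalk (biperiodic m) t2"
    then have "F t1 = F t2" using FG unfolding w_def by simp
    define r1 where "r1 = nat (t1 mod int n)"
    define r2 where "r2 = nat (t2 mod int n)"
    have r: "r1 < n" "r2 < n" using n0 unfolding r1_def r2_def by (simp_all add: nat_less_iff)
    define K where "K = t2 div int n - t1 div int n"
    have e: "P r1 - P r2 = of_int K * V" using \<open>F t1 = F t2\<close> unfolding F_def K_def r1_def r2_def
      by (simp add: algebra_simps)
    consider "K = 0" | "K = 1" | "K = -1" | "2 \<le> \<bar>K\<bar>" by linarith
    then show "t1 = t2"
    proof cases
      case 1
      then have "r1 = r2" using Pa[of r1 r2] r e by simp
      then show ?thesis using 1 unfolding K_def r1_def r2_def
        using dm3[of "int n" t1 t2] n0 by simp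
    next
      case 2
      then have "P r1 = V + P r2" using e by (simp add: algebra_simps)
      then show ?thesis using Pb[of r1 r2] r by simp
    next
      case 3
      then have "P r2 = V + P r1" using e by (simp add: algebra_simps)
      then show ?thesis using Pb[of r2 r1] r by simp
    next
      case 4
      then show ?thesis using NBC[of r2 r1 K] r e by simp
    qed
  qed
qed

theorem lemma1:
  fixes m :: "dir list"
  assumes "m \<noteq> []"
    and "free_finite (m @ m)"
  shows "free_biinf (biperiodic m)"
  using main assms by blast

end
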